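(* Let $m\ge 1$, let ${\bf h}\in\mathbb{F}_q^m$ be a nonzero column vector, and let $C$ be the linear $[m+1,m,d]_q$ code with generator matrix $G=[I\,|\,{\bf h}]$, where $I$ is the $m\times m$ identity matrix. If $\mathrm{wt}({\bf h})<m$, then $C$ is a completely regular code with $d=\rho=1$. If $\mathrm{wt}({\bf h})=m$, then $C$ is a completely regular code with $d=2$ and $\rho=1$.
   Context: $\mathbb{F}_q$ is the finite field with $q$ elements; $\mathrm{wt}$ is Hamming weight, $d$ the minimum Hamming distance of the code, and $\rho=\max_{{\bf v}\in\mathbb{F}_q^{m+1}}\min_{{\bf x}\in C}d({\bf v},{\bf x})$ its covering radius. A code $C$ is completely regular if for every vector ${\bf x}$, with $t=d({\bf x},C)$, the number of codewords at distance $i$ from ${\bf x}$ depends only on $t$ and $i$. *)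

theory Defs
  imports Main
begin

definition vecs :: "nat \<Rightarrow> 'a list set" where
  "vecs n = {x. length x = n}"

definition hdist :: "'a list \<Rightarrow> 'a list \<Rightarrow> nat" where
  "hdist x y = card {i. i < length x \<and> x ! i \<noteq> y ! i}"

definition wt :: "'a::zero list \<Rightarrow> nat" where
  "wt x = card {i. i < length x \<and> x ! i \<noteq> 0}"

definition gen_code :: "'a::comm_semiring_1 list list \<Rightarrow> nat \<Rightarrow> 'a list set" where
  "gen_code G n = {x. \<exists>u. length u = length G \<and>
      x = map (\<lambda>j. \<Sum>i<length G. u ! i * (G ! i ! j)) [0..<n]}"

definition gen_matrix_Ih :: "nat \<Rightarrow> 'a::{zero,one} list \<Rightarrow> 'a list list" where
  "gen_matrix_Ih m h = map (\<lambda>i. map (\<lambda>j. if j < m then (if i = j then 1 else 0) else h ! i)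
                              [0..<m+1]) [0..<m]"

definition min_dist :: "'a list set \<Rightarrow> nat" where
  "min_dist C = Min {hdist x y | x y. x \<in> C \<and> y \<in> C \<and> x \<noteq> y}"

definition dist_code :: "'a list \<Rightarrow> 'a list set \<Rightarrow> nat" where
  "dist_code v C = Min {hdist v x | x. x \<in> C}"

definition covering_radius :: "nat \<Rightarrow> 'a list set \<Rightarrow> nat" where
  "covering_radius n C = Max {dist_code v C | v. v \<in> vecs n}"

definition completely_regular :: "nat \<Rightarrow> 'a list set \<Rightarrow> bool" where
  "completely_regular n C \<longleftrightarrow>
     (\<forall>x \<in> vecs n. \<forall>y \<in> vecs n. dist_code x C = dist_code y C \<longrightarrow>
        (\<forall>i. card {c \<in> C. hdist x c = i} = card {c \<in> C. hdist y c = i}))"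

end

theory Submission
  imports Defs
begin

definition inC :: "nat \<Rightarrow> 'a::field list \<Rightarrow> 'a list \<Rightarrow> bool" where
  "inC m h x \<longleftrightarrow> length x = m+1 \<and> x!m = (\<Sum>i<m. x!i * h!i)"

definition Sy :: "nat \<Rightarrow> 'a::field list \<Rightarrow> 'a list \<Rightarrow> 'a" where
  "Sy m h x = x!m - (\<Sum>i<m. x!i * h!i)"

lemma inC_Sy: "inC m h x \<longleftrightarrow> length x = m+1 \<and> Sy m h x = 0"
  by (simp add: inC_def Sy_def)

lemma C_eq:
  fixes h :: "'a::field list"
  assumes "length h = m"
  shows "gen_code (gen_matrix_Ih m h) (m+1) = {x. inC m h x}"
proof (intro set_eqI iffI)
  fix x assume "x \<in> gen_code (gen_matrix_Ih m h) (m+1)"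
  then obtain u where u: "length u = m"
    "x = map (\<lambda>j. \<Sum>i<m. u ! i * (gen_matrix_Ih m h ! i ! j)) [0..<m+1]"
    unfolding gen_code_def gen_matrix_Ih_def by auto
  have G: "\<And>i j. i < m \<Longrightarrow> j < m+1 \<Longrightarrow> gen_matrix_Ih m h ! i ! j =
      (if j < m then (if i = j then 1 else 0) else h ! i)"
    unfolding gen_matrix_Ih_def by (simp del: upt_Suc)
  have xj: "x ! j = u ! j" if "j < m" for j
  proof -
    have "x ! j = (\<Sum>i<m. u ! i * (if i = j then 1 else 0))"
      using that u by (simp add: G del: upt_Suc)
    also have "\<dots> = u ! j" using that
      by (simp add: if_distrib sum.delta cong: if_cong)
    finally show ?thesis .
  qed
  have xm: "x ! m = (\<Sum>i<m. u ! i * h ! i)"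
    using u by (simp add: G del: upt_Suc)
  have "(\<Sum>i<m. u ! i * h ! i) = (\<Sum>i<m. x ! i * h ! i)"
    by (rule sum.cong) (auto simp: xj)
  then show "x \<in> {x. inC m h x}" using xm u by (simp add: inC_def)
next
  fix x assume "x \<in> {x. inC m h x}"
  then have x: "length x = m+1" "x!m = (\<Sum>i<m. x!i * h!i)" by (auto simp: inC_def)
  have G: "\<And>i j. i < m \<Longrightarrow> j < m+1 \<Longrightarrow> gen_matrix_Ih m h ! i ! j =
      (if j < m then (if i = j then 1 else 0) else h ! i)"
    unfolding gen_matrix_Ih_def by (simp del: upt_Suc)
  let ?u = "take m x"
  have "x = map (\<lambda>j. \<Sum>i<length (gen_matrix_Ih m h). ?u ! i * (gen_matrix_Ih m h ! i ! j)) [0..<m+1]"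
  proof (rule nth_equalityI)
    show "length x = length (map (\<lambda>j. \<Sum>i<length (gen_matrix_Ih m h). ?u ! i * (gen_matrix_Ih m h ! i ! j)) [0..<m+1])"
      using x by simp
  next
    fix j assume j: "j < length x"
    have L: "length (gen_matrix_Ih m h) = m" by (simp add: gen_matrix_Ih_def)
    have "(\<Sum>i<m. ?u ! i * (gen_matrix_Ih m h ! i ! j)) = x ! j"
    proof (cases "j < m")
      case True
      have "(\<Sum>i<m. ?u ! i * (gen_matrix_Ih m h ! i ! j)) = (\<Sum>i<m. ?u ! i * (if i = j then 1 else 0))"
        by (rule sum.cong) (use True in \<open>auto simp: G\<close>)
      also have "\<dots> = ?u ! j" using True
        by (simp add: if_distrib sum.delta cong: if_cong)
      finally show ?thesis using True by simp
    next
      case False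
      then have jm: "j = m" using j x by simp
      have "(\<Sum>i<m. ?u ! i * (gen_matrix_Ih m h ! i ! j)) = (\<Sum>i<m. x ! i * h ! i)"
        by (rule sum.cong) (use jm in \<open>auto simp: G\<close>)
      then show ?thesis using jm x by simp
    qed
    then show "x ! j = map (\<lambda>j. \<Sum>i<length (gen_matrix_Ih m h). ?u ! i * (gen_matrix_Ih m h ! i ! j)) [0..<m+1] ! j"
      using j x L by (simp del: upt_Suc)
  qed
  moreover have "length ?u = length (gen_matrix_Ih m h)" using x by (simp add: gen_matrix_Ih_def)
  ultimately show "x \<in> gen_code (gen_matrix_Ih m h) (m+1)"
    unfolding gen_code_def by blast
qed


lemma Sy_lin:
  fixes h :: "'a::field list"
  shows "Sy m h (map (\<lambda>j. a!j + t*(b!j - c!j)) [0..<m+1]) = Sy m h a + t*(Sy m h b - Sy m h c)"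
proof -
  have "(\<Sum>i<m. map (\<lambda>j. a!j + t*(b!j - c!j)) [0..<m+1] ! i * h!i)
      = (\<Sum>i<m. (a!i + t*(b!i - c!i)) * h!i)"
    by (rule sum.cong) (auto simp del: upt_Suc)
  also have "\<dots> = (\<Sum>i<m. a!i*h!i) + t*((\<Sum>i<m. b!i*h!i) - (\<Sum>i<m. c!i*h!i))"
    by (simp add: algebra_simps sum.distrib sum_subtractf sum_distrib_left)
  finally show ?thesis unfolding Sy_def by (simp add: algebra_simps del: upt_Suc)
qed

lemma hdist_len: "length x = n \<Longrightarrow> hdist x c = card {j. j < n \<and> x!j \<noteq> c!j}"
  by (simp add: hdist_def)

lemma count_eq:
  fixes h :: "'a::field list"
  assumes x: "length x = m+1" and y: "length y = m+1" and l: "l \<noteq> 0"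
    and S: "Sy m h y = l * Sy m h x"
  shows "card {c \<in> {z. inC m h z}. hdist x c = k} = card {c \<in> {z. inC m h z}. hdist y c = k}"
proof -
  define f where "f c = map (\<lambda>j. y!j + l*(c!j - x!j)) [0..<m+1]" for c
  define g where "g c = map (\<lambda>j. x!j + inverse l*(c!j - y!j)) [0..<m+1]" for c
  have hf: "hdist y (f c) = hdist x c" for c
  proof -
    have "{j. j < m+1 \<and> y!j \<noteq> f c!j} = {j. j < m+1 \<and> x!j \<noteq> c!j}"
      using l by (auto simp: f_def simp del: upt_Suc)
    then show ?thesis using x y by (simp add: hdist_len f_def del: upt_Suc)
  qed
  have hg: "hdist x (g c) = hdist y c" for c
  proof -
    have "{j. j < m+1 \<and> x!j \<noteq> g c!j} = {j. j < m+1 \<and> y!j \<noteq> c!j}"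
      using l by (auto simp: g_def simp del: upt_Suc)
    then show ?thesis using x y by (simp add: hdist_len g_def del: upt_Suc)
  qed
  show ?thesis
  proof (rule bij_betw_same_card, rule bij_betw_byWitness[where f'=g])
    show "\<forall>a\<in>{c \<in> {z. inC m h z}. hdist x c = k}. g (f a) = a"
    proof
      fix a assume "a \<in> {c \<in> {z. inC m h z}. hdist x c = k}"
      then have la: "length a = m+1" by (simp add: inC_def)
      show "g (f a) = a"
        by (rule nth_equalityI) (use la l in \<open>auto simp: f_def g_def field_simps simp del: upt_Suc\<close>)
    qed
    show "\<forall>a\<in>{c \<in> {z. inC m h z}. hdist y c = k}. f (g a) = a"
    proof
      fix a assume "a \<in> {c \<in> {z. inC m h z}. hdist y c = k}"
      then have la: "length a = m+1" by (simp add: inC_def)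
      show "f (g a) = a"
        by (rule nth_equalityI) (use la l in \<open>auto simp: f_def g_def field_simps simp del: upt_Suc\<close>)
    qed
    show "f ` {c \<in> {z. inC m h z}. hdist x c = k} \<subseteq> {c \<in> {z. inC m h z}. hdist y c = k}"
    proof
      fix b assume "b \<in> f ` {c \<in> {z. inC m h z}. hdist x c = k}"
      then obtain a where a: "inC m h a" "hdist x a = k" "b = f a" by auto
      have "Sy m h (f a) = 0" using Sy_lin[of m h y l a x] a S unfolding f_def
        by (simp add: inC_Sy)
      then show "b \<in> {c \<in> {z. inC m h z}. hdist y c = k}"
        using a hf by (simp add: inC_Sy f_def del: upt_Suc)
    qed
    show "g ` {c \<in> {z. inC m h z}. hdist y c = k} \<subseteq> {c \<in> {z. inC m h z}. hdist x c = k}"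
    proof
      fix b assume "b \<in> g ` {c \<in> {z. inC m h z}. hdist y c = k}"
      then obtain a where a: "inC m h a" "hdist y a = k" "b = g a" by auto
      have "Sy m h (g a) = 0" using Sy_lin[of m h x "inverse l" a y] a S l unfolding g_def
        by (simp add: inC_Sy)
      then show "b \<in> {c \<in> {z. inC m h z}. hdist x c = k}"
        using a hg by (simp add: inC_Sy g_def del: upt_Suc)
    qed
  qed
qed


lemma hdist_le: "hdist v x \<le> length v"
proof -
  have "card {i. i < length v \<and> v ! i \<noteq> x ! i} \<le> card {..<length v}"
    by (rule card_mono) auto
  then show ?thesis by (simp add: hdist_def)
qed

lemma hdist_zero: "length v = length x \<Longrightarrow> hdist v x = 0 \<Longrightarrow> v = x"
  by (auto simp: hdist_def intro!: nth_equalityI)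

lemma dist_code_eq:
  fixes h :: "'a::field list"
  assumes v: "length v = m+1"
  shows "dist_code v {z. inC m h z} = (if Sy m h v = 0 then 0 else 1)"
proof -
  let ?A = "{hdist v x | x. x \<in> {z. inC m h z}}"
  have fin: "finite ?A"
    by (rule finite_subset[of _ "{..length v}"]) (auto intro: hdist_le)
  define c where "c = v[m := (\<Sum>i<m. v!i * h!i)]"
  have lc: "length c = m+1" using v by (simp add: c_def)
  have "(\<Sum>i<m. c!i * h!i) = (\<Sum>i<m. v!i * h!i)"
    by (rule sum.cong) (auto simp: c_def)
  then have cC: "inC m h c" using v lc by (simp add: inC_def c_def)
  have "{j. j < length v \<and> v!j \<noteq> c!j} \<subseteq> {m}" by (auto simp: c_def) (metis nth_list_update_neq)
  then have "card {j. j < length v \<and> v!j \<noteq> c!j} \<le> card {m}"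
    by (intro card_mono) auto
  then have hc: "hdist v c \<le> 1" unfolding hdist_def by simp
  show ?thesis
  proof (cases "Sy m h v = 0")
    case True
    then have "inC m h v" using v by (simp add: inC_Sy)
    moreover have "hdist v v = 0" by (simp add: hdist_def)
    ultimately have "0 \<in> ?A" by (metis (mono_tags, lifting) mem_Collect_eq)
    then show ?thesis unfolding dist_code_def using True
      by (intro Min_eqI[OF fin]) auto
  next
    case False
    have ge: "1 \<le> y" if "y \<in> ?A" for y
    proof -
      obtain x where x: "inC m h x" "y = hdist v x" using \<open>y \<in> ?A\<close> by auto
      show ?thesis
      proof (rule ccontr)
        assume "\<not> 1 \<le> y"
        then have "hdist v x = 0" using x by simp
        moreover have "length v = length x" using x v by (simp add: inC_def)
        ultimately have "v = x" using hdist_zero by blast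
        then show False using x False by (simp add: inC_Sy)
      qed
    qed
    have "hdist v c \<ge> 1" using ge cC by blast
    then have "hdist v c = 1" using hc by simp
    then have "1 \<in> ?A" using cC by (metis (mono_tags, lifting) mem_Collect_eq)
    then show ?thesis unfolding dist_code_def using False ge
      by (intro Min_eqI[OF fin]) auto
  qed
qed

lemma comp_reg:
  fixes h :: "'a::field list"
  shows "completely_regular (m+1) {z. inC m h z}"
  unfolding completely_regular_def
proof (intro ballI impI allI)
  fix x y k assume x: "x \<in> vecs (m+1)" and y: "y \<in> vecs (m+1)"
    and d: "dist_code x {z. inC m h z} = dist_code y {z. inC m h z}"
  have lx: "length x = m+1" and ly: "length y = m+1" using x y by (auto simp: vecs_def)
  have dx: "dist_code x {z. inC m h z} = (if Sy m h x = 0 then 0 else 1)"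
    by (rule dist_code_eq[OF lx])
  have dy: "dist_code y {z. inC m h z} = (if Sy m h y = 0 then 0 else 1)"
    by (rule dist_code_eq[OF ly])
  have iff: "Sy m h x = 0 \<longleftrightarrow> Sy m h y = 0"
  proof -
    have "(if Sy m h x = 0 then 0 else 1) = (if Sy m h y = 0 then 0 else (1::nat))"
      using d dx dy by simp
    then show ?thesis by (cases "Sy m h x = 0"; cases "Sy m h y = 0") simp_all
  qed
  show "card {c \<in> {z. inC m h z}. hdist x c = k} = card {c \<in> {z. inC m h z}. hdist y c = k}"
  proof (cases "Sy m h x = 0")
    case True
    then have "Sy m h y = 1 * Sy m h x" using iff by simp
    then show ?thesis by (rule count_eq[OF lx ly one_neq_zero])
  next
    case False
    then have "Sy m h y / Sy m h x \<noteq> 0" "Sy m h y = (Sy m h y / Sy m h x) * Sy m h x"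
      using iff by simp_all
    then show ?thesis by (rule count_eq[OF lx ly])
  qed
qed

lemma cov_rad:
  fixes h :: "'a::field list"
  shows "covering_radius (m+1) {z. inC m h z} = 1"
proof -
  let ?R = "{dist_code v {z. inC m h z} | v. v \<in> vecs (m + 1)}"
  have sub: "?R \<subseteq> {0,1}"
  proof
    fix r assume "r \<in> ?R"
    then obtain v where "r = dist_code v {z. inC m h z}" "length v = m+1"
      by (auto simp: vecs_def)
    then show "r \<in> {0,1}" using dist_code_eq[of v m h] by simp
  qed
  have fin: "finite ?R" by (rule finite_subset[OF sub]) simp
  define w :: "'a list" where "w = replicate m 0 @ [1]"
  have lw: "length w = m+1" by (simp add: w_def)
  have "(\<Sum>i<m. w!i * h!i) = 0" by (rule sum.neutral) (auto simp: w_def nth_append)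
  then have "Sy m h w = 1" by (simp add: Sy_def w_def nth_append)
  then have "dist_code w {z. inC m h z} = 1" using dist_code_eq[OF lw, of h] by simp
  moreover have "w \<in> vecs (m+1)" using lw by (simp add: vecs_def)
  ultimately have "1 \<in> ?R" by (metis (mono_tags, lifting) mem_Collect_eq)
  then show ?thesis unfolding covering_radius_def
    using sub by (intro Max_eqI[OF fin]) auto
qed

lemma min_dist_lem:
  fixes h :: "'a::field list"
  assumes lh: "length h = m" and k: "k < m"
    and lb: "\<And>x y. inC m h x \<Longrightarrow> inC m h y \<Longrightarrow> x \<noteq> y \<Longrightarrow> hdist x y \<ge> (if h!k = 0 then 1 else 2)"
  shows "min_dist {z. inC m h z} = (if h!k = 0 then 1 else 2)"
proof -
  let ?M = "{hdist x y | x y. x \<in> {z. inC m h z} \<and> y \<in> {z. inC m h z} \<and> x \<noteq> y}"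
  have sub: "?M \<subseteq> {..m+1}"
  proof
    fix r assume "r \<in> ?M"
    then obtain x y where "r = hdist x y" "inC m h x" by blast
    then show "r \<in> {..m+1}" using hdist_le[of x y] by (simp add: inC_def)
  qed
  have fin: "finite ?M" by (rule finite_subset[OF sub]) simp
  define z :: "'a list" where "z = replicate (m+1) 0"
  define e where "e = map (\<lambda>j. if j = k then 1 else if j = m then h!k else 0) [0..<m+1]"
  have z0: "\<And>i. i < m+1 \<Longrightarrow> z!i = 0" by (simp add: z_def del: replicate_Suc)
  have "(\<Sum>i<m. z!i * h!i) = 0" by (rule sum.neutral) (simp add: z0)
  then have zC: "inC m h z" using z0[of m] by (simp add: inC_def z_def del: replicate_Suc)
  have "(\<Sum>i<m. e!i * h!i) = (\<Sum>i<m. if i = k then h!k else 0)"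
    by (rule sum.cong) (auto simp: e_def simp del: upt_Suc)
  also have "\<dots> = h!k" using k by simp
  finally have eC: "inC m h e" using k by (simp add: inC_def e_def del: upt_Suc)
  have ne: "z \<noteq> e"
  proof
    assume "z = e" then have "z!k = e!k" by simp
    then show False using k z0[of k] by (simp add: e_def del: upt_Suc)
  qed
  have S: "{j. j < length z \<and> z!j \<noteq> e!j} = (if h!k = 0 then {k} else {k,m})"
  proof -
    have lz: "length z = m+1" by (simp add: z_def)
    have en: "\<And>j. j < m+1 \<Longrightarrow> e!j = (if j = k then 1 else if j = m then h!k else 0)"
      by (simp add: e_def del: upt_Suc)
    have "{j. j < length z \<and> z!j \<noteq> e!j} = {j. j < m+1 \<and> (if j = k then 1 else if j = m then h!k else 0) \<noteq> 0}"
      proof (rule Collect_cong)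
      fix j show "(j < length z \<and> z!j \<noteq> e!j) = (j < m+1 \<and> (if j = k then 1 else if j = m then h!k else 0) \<noteq> 0)"
        using lz z0[of j] en[of j] by (cases "j < m+1") simp_all
    qed
    also have "\<dots> = (if h!k = 0 then {k} else {k,m})" using k by (cases "h!k = 0") auto
    finally show ?thesis .
  qed
  have hz: "hdist z e = (if h!k = 0 then 1 else 2)"
    using k by (simp add: hdist_def S)
  have "hdist z e \<in> ?M" using zC eC ne by blast
  then have memM: "(if h!k = 0 then 1 else 2) \<in> ?M" by (simp only: hz)
  have lbM: "\<And>r. r \<in> ?M \<Longrightarrow> (if h!k = 0 then 1 else 2) \<le> r"
    using lb by blast
  show ?thesis unfolding min_dist_def
    by (rule Min_eqI[OF fin lbM memM])
qed

lemma lb1: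
  fixes h :: "'a::field list"
  assumes "inC m h x" "inC m h y" "x \<noteq> y"
  shows "hdist x y \<ge> 1"
proof (rule ccontr)
  assume "\<not> 1 \<le> hdist x y"
  then have "hdist x y = 0" by simp
  moreover have "length x = length y" using assms by (simp add: inC_def)
  ultimately have "x = y" using hdist_zero by blast
  then show False using assms by simp
qed

lemma lb2:
  fixes h :: "'a::field list"
  assumes hn: "\<forall>i<m. h!i \<noteq> 0" and x: "inC m h x" and y: "inC m h y" and ne: "x \<noteq> y"
  shows "hdist x y \<ge> 2"
proof (rule ccontr)
  assume "\<not> 2 \<le> hdist x y"
  with lb1[OF x y ne] have "hdist x y = 1" by simp
  then have "card {j. j < length x \<and> x!j \<noteq> y!j} = 1" by (simp add: hdist_def)
  then obtain k where D: "{j. j < length x \<and> x!j \<noteq> y!j} = {k}" by (rule card_1_singletonE)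
  have lx: "length x = m+1" using x by (simp add: inC_def)
  have eq: "x!j = y!j" if "j < m+1" "j \<noteq> k" for j
  proof -
    have "j \<notin> {j. j < length x \<and> x!j \<noteq> y!j}" using D that by simp
    then show ?thesis using lx that by simp
  qed
  have "k \<in> {j. j < length x \<and> x!j \<noteq> y!j}" using D by simp
  then have kk: "k < m+1" "x!k \<noteq> y!k" using lx by simp_all
  have E: "x!m - y!m = (\<Sum>i<m. (x!i - y!i)*h!i)"
    using x y by (simp add: inC_def sum_subtractf left_diff_distrib)
  show False
  proof (cases "k = m")
    case True
    have "(\<Sum>i<m. (x!i - y!i)*h!i) = 0"
    proof (rule sum.neutral, rule ballI)
      fix i assume "i \<in> {..<m}"
      then have "x!i = y!i" using eq True by simp
      then show "(x!i - y!i)*h!i = 0" by simp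
    qed
    then show False using E kk True by simp
  next
    case False
    then have km: "k < m" using kk by simp
    have "(\<Sum>i<m. (x!i - y!i)*h!i) = (\<Sum>i<m. if i = k then (x!k - y!k)*h!k else 0)"
    proof (rule sum.cong[OF refl])
      fix i assume "i \<in> {..<m}"
      then show "(x!i - y!i)*h!i = (if i = k then (x!k - y!k)*h!k else 0)"
        using eq[of i] by (cases "i = k") simp_all
    qed
    also have "\<dots> = (x!k - y!k)*h!k" using km by simp
    finally have "x!m - y!m = (x!k - y!k)*h!k" using E by simp
    moreover have "x!m = y!m" using eq[of m] False by simp
    moreover have "h!k \<noteq> 0" using hn km by simp
    ultimately show False using kk by simp
  qed
qed

theorem theorem3p1:
  fixes h :: "'a::{finite,field} list" and m :: nat
  assumes "m \<ge> 1" and "length h = m" and "h \<noteq> replicate m 0"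
  defines "C \<equiv> gen_code (gen_matrix_Ih m h) (m + 1)"
  shows "(wt h < m \<longrightarrow> completely_regular (m + 1) C \<and> min_dist C = 1
                          \<and> covering_radius (m + 1) C = 1)
       \<and> (wt h = m \<longrightarrow> completely_regular (m + 1) C \<and> min_dist C = 2
                          \<and> covering_radius (m + 1) C = 1)"
proof -
  have Ceq: "C = {z. inC m h z}" unfolding C_def using C_eq[OF assms(2)] .
  have W: "wt h = card {i. i < m \<and> h!i \<noteq> 0}" using assms(2) by (simp add: wt_def)
  have A: "min_dist C = 1" if "wt h < m"
  proof -
    obtain k where k: "k < m" "h!k = 0"
    proof (rule ccontr)
      assume "\<not> thesis"
      then have "{i. i < m \<and> h!i \<noteq> 0} = {..<m}" using that by auto
      then show False using \<open>wt h < m\<close> W by simp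
    qed
    have "min_dist {z. inC m h z} = (if h!k = 0 then 1 else 2)"
      by (rule min_dist_lem[OF assms(2) k(1)]) (use k lb1 in simp)
    then show ?thesis unfolding Ceq using k by simp
  qed
  have B: "min_dist C = 2" if "wt h = m"
  proof -
    have "{i. i < m \<and> h!i \<noteq> 0} = {..<m}"
      using W that by (intro card_subset_eq) auto
    then have hn: "\<forall>i<m. h!i \<noteq> 0" by auto
    have "0 < m" using assms(1) by simp
    then have "min_dist {z. inC m h z} = (if h!0 = 0 then 1 else 2)"
      by (intro min_dist_lem[OF assms(2)]) (use hn lb2[OF hn] in auto)
    then show ?thesis unfolding Ceq using hn \<open>0 < m\<close> by simp
  qed
  show ?thesis using A B comp_reg[of m h] cov_rad[of m h] Ceq by simp
qed

end
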